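(* Let $\mathcal{R}_i$ be a rule stratum of a stratifiable Datalog program and let $t \ge 0$. Assume every rule $r \in \mathcal{R}_i$ has arity $|\mathcal{X}(r)| \ge 2$ and every literal in its body $\mathrm{B}(r)$ has arity at most $2$. Fix a total order $\mathit{rank}$ on edges. For each $r \in \mathcal{R}_i$, with $k = |\mathcal{X}(r)|$, enumerate all $k$-cliques of the substitution consistency graph $\mathcal{G}(r, J_i^t)$ that are seeded at (i.e., contain) some edge $e \in \Delta\mathcal{E}_{i,r}^t$, and report such a clique $\mathcal{C}$ (from seed $e$) only if its owner $\omega(\mathcal{C})$ equals $e$. Let $H_i^t$ be the set of heads $\mathrm{H}(r[\rho])$ of the ground rules corresponding to the reported cliques $\{x/\rho(x) \mid x \in \mathcal{X}(r)\}$. Then $$H_i^t = \{\mathrm{H}(\bar r) \mid \bar r \in \mathrm{gr}(\mathcal{R}_i, J_i^t),\ \mathrm{B}(\bar r) \cap \Delta_i^t \neq \emptyset\},$$ and consequently $\Delta_i^{t+1} = H_i^t \setminus J_i^t$.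
   Context: A Datalog program is a pair $\langle \mathcal{F}, \mathcal{R}\rangle$ of a set $\mathcal{F}$ of facts (ground atoms over predicates with fixed arities) and a set $\mathcal{R}$ of rules $h \leftarrow b_1,\ldots,b_k$ with head atom $h=\mathrm{H}(r)$ and body literals $\mathrm{B}(r)=\{b_1,\ldots,b_k\}$ (atoms or negated atoms, whose arguments are variables or object constants). $\mathcal{X}(y)$ denotes the set of variables occurring in $y$, and the arity of $y$ is $|\mathcal{X}(y)|$; $\mathcal{O}$ is the set of objects. For a substitution $\rho$ (a map from variables to objects), $y[\rho]$ replaces each variable $x$ by $\rho(x)$. A ground rule is applicable in a fact set $J$ if every positive body atom is in $J$ and every negated body atom is not in $J$; $\mathrm{gr}(\mathcal{R}', J)$ is the set of ground instances of rules in $\mathcal{R}'$ applicable in $J$. A program is stratifiable if its predicates can be partitioned into strata $\mathcal{P}_1,\ldots,\mathcal{P}_\ell$ such that if $P$ occurs positively (resp. negatively) in the body of a rule whose head predicate is $P'$, with $P\in\mathcal{P}_a$, $P'\in\mathcal{P}_b$, then $a\le b$ (resp. $a<b$); rule stratum $\mathcal{R}_i$ consists of the rules whose head predicate is in $\mathcal{P}_i$. With $\mathcal{F}_0=\mathcal{F}$, semi-naive evaluation of stratum $i$ sets $J_i^0 = \Delta_i^0 = \mathcal{F}_{i-1}$, and for $t \ge 0$: $\Delta_i^{t+1} = \{\mathrm{H}(\bar r) \mid \bar r \in \mathrm{gr}(\mathcal{R}_i, J_i^t),\ \mathrm{B}(\bar r)\cap \Delta_i^t \neq \emptyset\} \setminus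 J_i^t$ and $J_i^{t+1} = J_i^t \cup \Delta_i^{t+1}$; it stops when $\Delta_i^t=\emptyset$, giving $\mathcal{F}_i = J_i^t$. Substitution consistency graph $\mathcal{G}(r,J)$ of a rule $r$ in a fact set $J$: vertex set $\{x/o \mid x \in \mathcal{X}(r), o \in \mathcal{O}\}$; the edges are all pairs $\{v,v'\}$ of vertices except those in $\mathcal{I}^{\neq}\cup\mathcal{I}^+\cup\mathcal{I}^-$, where $\mathcal{I}^{\neq}$ is the set of pairs $\{x/o_1, x/o_2\}$ with $o_1\neq o_2$; $\mathcal{I}^+$ is the set of pairs $\{v,v'\}$ such that some positive body atom $p$ of $r$, after applying the partial substitution $\{v,v'\}$, matches no atom of $J$; and $\mathcal{I}^-$ is the set of pairs $\{v,v'\}$ such that for some negated body atom $p$ of $r$, $p[v,v'] \in J$. An atom $P(x_1,\ldots,x_n)$ matches $P'(x_1',\ldots,x_n')$ iff $P=P'$ and for every $i$, $x_i$ or $x_i'$ is a variable or else $x_i = x_i'$. $\Delta$-edges: $\Delta\mathcal{E}_{i,r}^t = \mathcal{E}(\mathcal{G}(r, J_i^t)) \setminus \mathcal{E}(\mathcal{G}(r, J_i^{t-1}))$, with the convention $J_i^{-1} = \emptyset$. Owner: for a $k$-clique $\mathcal{C}$ ($k\ge2$) containing at least one edge of $\Delta\mathcal{E}_{i,r}^t$, $\omega(\mathcal{C})$ is the edge of $\Delta\mathcal{E}_{i,r}^t$ with both endpoints in $\mathcal{C}$ of minimum $\mathit{rank}$. *)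

theory Defs
  imports Main
begin

text \<open>Predicates have type 'p, variables 'v, objects 'o (the object set O is UNIV :: 'o set).\<close>

datatype ('v,'o) trm = Var 'v | Obj 'o
datatype ('p,'v,'o) atom = Atom 'p "('v,'o) trm list"
datatype ('p,'v,'o) lit = Pos "('p,'v,'o) atom" | Neg "('p,'v,'o) atom"
datatype ('p,'v,'o) rule = Rule "('p,'v,'o) atom" "('p,'v,'o) lit list"

text \<open>Facts are ground atoms, represented as a predicate with a list of objects.\<close>
type_synonym ('p,'o) fact = "'p \<times> 'o list"

fun atom_pred :: "('p,'v,'o) atom \<Rightarrow> 'p" where
  "atom_pred (Atom P ts) = P"

fun atom_args :: "('p,'v,'o) atom \<Rightarrow> ('v,'o) trm list" where
  "atom_args (Atom P ts) = ts"

fun lit_atom :: "('p,'v,'o) lit \<Rightarrow> ('p,'v,'o) atom" where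
  "lit_atom (Pos a) = a" | "lit_atom (Neg a) = a"

fun head :: "('p,'v,'o) rule \<Rightarrow> ('p,'v,'o) atom" where
  "head (Rule h b) = h"

fun body :: "('p,'v,'o) rule \<Rightarrow> ('p,'v,'o) lit set" where
  "body (Rule h b) = set b"

definition pos_atoms :: "('p,'v,'o) rule \<Rightarrow> ('p,'v,'o) atom set" where
  "pos_atoms r = {a. Pos a \<in> body r}"

definition neg_atoms :: "('p,'v,'o) rule \<Rightarrow> ('p,'v,'o) atom set" where
  "neg_atoms r = {a. Neg a \<in> body r}"

fun vars_trm :: "('v,'o) trm \<Rightarrow> 'v set" where
  "vars_trm (Var x) = {x}" | "vars_trm (Obj c) = {}"

definition vars_atom :: "('p,'v,'o) atom \<Rightarrow> 'v set" where
  "vars_atom a = (\<Union>t\<in>set (atom_args a). vars_trm t)"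

definition vars_lit :: "('p,'v,'o) lit \<Rightarrow> 'v set" where
  "vars_lit l = vars_atom (lit_atom l)"

definition vars_rule :: "('p,'v,'o) rule \<Rightarrow> 'v set" where
  "vars_rule r = vars_atom (head r) \<union> (\<Union>l\<in>body r. vars_lit l)"

fun subst_trm :: "('v \<Rightarrow> 'o) \<Rightarrow> ('v,'o) trm \<Rightarrow> 'o" where
  "subst_trm \<rho> (Var x) = \<rho> x" | "subst_trm \<rho> (Obj c) = c"

definition ground_atom :: "('v \<Rightarrow> 'o) \<Rightarrow> ('p,'v,'o) atom \<Rightarrow> ('p,'o) fact" where
  "ground_atom \<rho> a = (atom_pred a, map (subst_trm \<rho>) (atom_args a))"

definition ground_pos :: "('p,'v,'o) rule \<Rightarrow> ('v \<Rightarrow> 'o) \<Rightarrow> ('p,'o) fact set" where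
  "ground_pos r \<rho> = ground_atom \<rho> ` pos_atoms r"

definition ground_neg :: "('p,'v,'o) rule \<Rightarrow> ('v \<Rightarrow> 'o) \<Rightarrow> ('p,'o) fact set" where
  "ground_neg r \<rho> = ground_atom \<rho> ` neg_atoms r"

definition applicable :: "('p,'o) fact set \<Rightarrow> ('p,'v,'o) rule \<Rightarrow> ('v \<Rightarrow> 'o) \<Rightarrow> bool" where
  "applicable J r \<rho> \<longleftrightarrow> ground_pos r \<rho> \<subseteq> J \<and> ground_neg r \<rho> \<inter> J = {}"

text \<open>The set {H(rbar) | rbar in gr(Rs,J), B(rbar) \<inter> D \<noteq> {}}. Only positive body
  literals of a ground rule are facts, so B(rbar) \<inter> D is the set of positive ground body atoms in D.\<close>
definition sn_heads :: "('p,'v,'o) rule set \<Rightarrow> ('p,'o) fact set \<Rightarrow> ('p,'o) fact set \<Rightarrow> ('p,'o) fact set" where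
  "sn_heads Rs J D = {ground_atom \<rho> (head r) | r \<rho>.
      r \<in> Rs \<and> applicable J r \<rho> \<and> ground_pos r \<rho> \<inter> D \<noteq> {}}"

definition stratification :: "('p,'v,'o) rule set \<Rightarrow> nat \<Rightarrow> ('p \<Rightarrow> nat) \<Rightarrow> bool" where
  "stratification Rs l strat \<longleftrightarrow>
     (\<forall>P. strat P \<in> {1..l}) \<and>
     (\<forall>r\<in>Rs. \<forall>a\<in>pos_atoms r. strat (atom_pred a) \<le> strat (atom_pred (head r))) \<and>
     (\<forall>r\<in>Rs. \<forall>a\<in>neg_atoms r. strat (atom_pred a) < strat (atom_pred (head r)))"

definition rule_stratum :: "('p,'v,'o) rule set \<Rightarrow> ('p \<Rightarrow> nat) \<Rightarrow> nat \<Rightarrow> ('p,'v,'o) rule set" where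
  "rule_stratum Rs strat i = {r\<in>Rs. strat (atom_pred (head r)) = i}"

definition sn_step :: "('p,'v,'o) rule set \<Rightarrow> ('p,'o) fact set \<times> ('p,'o) fact set
                         \<Rightarrow> ('p,'o) fact set \<times> ('p,'o) fact set" where
  "sn_step Rs JD = (let D' = sn_heads Rs (fst JD) (snd JD) - fst JD in (fst JD \<union> D', D'))"

text \<open>The evaluation stops when Delta becomes empty, after which J is constant; we take F_i as
  the union of all J_i^t (which coincides with the stopping value).\<close>
primrec F_str :: "('p,'o) fact set \<Rightarrow> ('p,'v,'o) rule set \<Rightarrow> ('p \<Rightarrow> nat) \<Rightarrow> nat \<Rightarrow> ('p,'o) fact set" where
  "F_str F Rs strat 0 = F"
| "F_str F Rs strat (Suc i) =
     (\<Union>t. fst ((sn_step (rule_stratum Rs strat (Suc i)) ^^ t) (F_str F Rs strat i, F_str F Rs strat i)))"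

definition sn_state :: "('p,'o) fact set \<Rightarrow> ('p,'v,'o) rule set \<Rightarrow> ('p \<Rightarrow> nat) \<Rightarrow> nat \<Rightarrow> nat
                         \<Rightarrow> ('p,'o) fact set \<times> ('p,'o) fact set" where
  "sn_state F Rs strat i t =
     (sn_step (rule_stratum Rs strat i) ^^ t) (F_str F Rs strat (i - 1), F_str F Rs strat (i - 1))"

definition Jst :: "('p,'o) fact set \<Rightarrow> ('p,'v,'o) rule set \<Rightarrow> ('p \<Rightarrow> nat) \<Rightarrow> nat \<Rightarrow> nat \<Rightarrow> ('p,'o) fact set" where
  "Jst F Rs strat i t = fst (sn_state F Rs strat i t)"

definition Dst :: "('p,'o) fact set \<Rightarrow> ('p,'v,'o) rule set \<Rightarrow> ('p \<Rightarrow> nat) \<Rightarrow> nat \<Rightarrow> nat \<Rightarrow> ('p,'o) fact set" where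
  "Dst F Rs strat i t = snd (sn_state F Rs strat i t)"

definition Jprev :: "('p,'o) fact set \<Rightarrow> ('p,'v,'o) rule set \<Rightarrow> ('p \<Rightarrow> nat) \<Rightarrow> nat \<Rightarrow> nat \<Rightarrow> ('p,'o) fact set" where
  "Jprev F Rs strat i t = (if t = 0 then {} else Jst F Rs strat i (t - 1))"

text \<open>A vertex x/o is the pair (x,o); an edge is a 2-element set of vertices.\<close>

definition psub_of :: "('v \<times> 'o) set \<Rightarrow> 'v \<Rightarrow> 'o option" where
  "psub_of S x = (if \<exists>c. (x,c) \<in> S then Some (SOME c. (x,c) \<in> S) else None)"

fun psubst_trm :: "('v \<Rightarrow> 'o option) \<Rightarrow> ('v,'o) trm \<Rightarrow> ('v,'o) trm" where
  "psubst_trm \<sigma> (Var x) = (case \<sigma> x of None \<Rightarrow> Var x | Some c \<Rightarrow> Obj c)"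
| "psubst_trm \<sigma> (Obj c) = Obj c"

definition psubst_atom :: "('v \<Rightarrow> 'o option) \<Rightarrow> ('p,'v,'o) atom \<Rightarrow> ('p,'v,'o) atom" where
  "psubst_atom \<sigma> a = Atom (atom_pred a) (map (psubst_trm \<sigma>) (atom_args a))"

definition matches :: "('p,'v,'o) atom \<Rightarrow> ('p,'o) fact \<Rightarrow> bool" where
  "matches a f \<longleftrightarrow> atom_pred a = fst f \<and> length (atom_args a) = length (snd f) \<and>
     (\<forall>j < length (snd f). (case atom_args a ! j of Var _ \<Rightarrow> True | Obj c \<Rightarrow> c = snd f ! j))"

definition atom_of_fact :: "('p,'o) fact \<Rightarrow> ('p,'v,'o) atom" where
  "atom_of_fact f = Atom (fst f) (map Obj (snd f))"

definition scg_verts :: "('p,'v,'o) rule \<Rightarrow> ('v \<times> 'o) set" where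
  "scg_verts r = {v. fst v \<in> vars_rule r}"

definition scg_edges :: "('p,'v,'o) rule \<Rightarrow> ('p,'o) fact set \<Rightarrow> ('v \<times> 'o) set set" where
  "scg_edges r J = {{v, v'} | v v'. v \<in> scg_verts r \<and> v' \<in> scg_verts r \<and> v \<noteq> v' \<and>
      \<comment> \<open>not in I^neq\<close>
      \<not> (fst v = fst v' \<and> snd v \<noteq> snd v') \<and>
      \<comment> \<open>not in I^+\<close>
      \<not> (\<exists>p\<in>pos_atoms r. \<forall>f\<in>J. \<not> matches (psubst_atom (psub_of {v, v'}) p) f) \<and>
      \<comment> \<open>not in I^-\<close>
      \<not> (\<exists>p\<in>neg_atoms r. psubst_atom (psub_of {v, v'}) p \<in> atom_of_fact ` J)}"

definition is_clique :: "('v \<times> 'o) set \<Rightarrow> ('v \<times> 'o) set set \<Rightarrow> nat \<Rightarrow> ('v \<times> 'o) set \<Rightarrow> bool" where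
  "is_clique V E k C \<longleftrightarrow> C \<subseteq> V \<and> finite C \<and> card C = k \<and>
     (\<forall>v\<in>C. \<forall>v'\<in>C. v \<noteq> v' \<longrightarrow> {v, v'} \<in> E)"

definition delta_edges :: "('p,'o) fact set \<Rightarrow> ('p,'v,'o) rule set \<Rightarrow> ('p \<Rightarrow> nat) \<Rightarrow> nat \<Rightarrow> ('p,'v,'o) rule
                            \<Rightarrow> nat \<Rightarrow> ('v \<times> 'o) set set" where
  "delta_edges F Rs strat i r t =
     scg_edges r (Jst F Rs strat i t) - scg_edges r (Jprev F Rs strat i t)"

text \<open>Owner of a clique C w.r.t. the Delta-edge set D and the total order rk (a relation,
  (e,e') \<in> rk meaning rank e \<le> rank e'): the rk-minimal edge of D with both endpoints in C.\<close>
definition owner :: "('v \<times> 'o) set rel \<Rightarrow> ('v \<times> 'o) set set \<Rightarrow> ('v \<times> 'o) set \<Rightarrow> ('v \<times> 'o) set" where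
  "owner rk D C = (THE e. e \<in> D \<and> e \<subseteq> C \<and> (\<forall>e'\<in>D. e' \<subseteq> C \<longrightarrow> (e, e') \<in> rk))"

definition clique_subst :: "('v \<times> 'o) set \<Rightarrow> 'v \<Rightarrow> 'o" where
  "clique_subst C x = (SOME c. (x, c) \<in> C)"

definition reported_heads :: "('p,'o) fact set \<Rightarrow> ('p,'v,'o) rule set \<Rightarrow> ('p \<Rightarrow> nat) \<Rightarrow> ('v \<times> 'o) set rel
                               \<Rightarrow> nat \<Rightarrow> nat \<Rightarrow> ('p,'o) fact set" where
  "reported_heads F Rs strat rk i t =
     {ground_atom (clique_subst C) (head r) | r C e.
        r \<in> rule_stratum Rs strat i \<and>
        is_clique (scg_verts r) (scg_edges r (Jst F Rs strat i t)) (card (vars_rule r)) C \<and>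
        e \<in> delta_edges F Rs strat i r t \<and> e \<subseteq> C \<and>
        owner rk (delta_edges F Rs strat i r t) C = e}"

definition wf_program :: "('p \<Rightarrow> nat) \<Rightarrow> ('p,'o) fact set \<Rightarrow> ('p,'v,'o) rule set \<Rightarrow> bool" where
  "wf_program ar F Rs \<longleftrightarrow> finite F \<and> finite Rs \<and>
     (\<forall>f\<in>F. length (snd f) = ar (fst f)) \<and>
     (\<forall>r\<in>Rs. length (atom_args (head r)) = ar (atom_pred (head r)) \<and>
        (\<forall>l\<in>body r. length (atom_args (lit_atom l)) = ar (atom_pred (lit_atom l))))"

end

theory Submission
  imports Defs
begin


definition sig :: "'v set \<Rightarrow> ('v \<Rightarrow> 'o) \<Rightarrow> 'v \<Rightarrow> 'o option" where
  "sig X \<rho> z = (if z \<in> X then Some (\<rho> z) else None)"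

lemma psub_of_pair: "psub_of {(x, \<rho> x), (y, \<rho> y)} = sig {x,y} \<rho>"
  by (rule ext) (auto simp: psub_of_def sig_def)

lemma ground_atom_cong: "(\<And>x. x \<in> vars_atom a \<Longrightarrow> \<rho> x = \<rho>' x) \<Longrightarrow> ground_atom \<rho> a = ground_atom \<rho>' a"
proof -
  assume h: "\<And>x. x \<in> vars_atom a \<Longrightarrow> \<rho> x = \<rho>' x"
  have "\<And>t. t \<in> set (atom_args a) \<Longrightarrow> subst_trm \<rho> t = subst_trm \<rho>' t"
  proof -
    fix t assume "t \<in> set (atom_args a)"
    then have "vars_trm t \<subseteq> vars_atom a" unfolding vars_atom_def by blast
    then show "subst_trm \<rho> t = subst_trm \<rho>' t"
      using h by (cases t) auto
  qed
  then show ?thesis by (simp add: ground_atom_def)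
qed

lemma P_a: "matches (psubst_atom (sig X \<rho>) p) (ground_atom \<rho> p)"
  unfolding matches_def
proof (intro conjI allI impI)
  fix j assume "j < length (snd (ground_atom \<rho> p))"
  then have j: "j < length (atom_args p)" by (simp add: ground_atom_def)
  have e: "snd (ground_atom \<rho> p) ! j = subst_trm \<rho> (atom_args p ! j)" using j by (simp add: ground_atom_def)
  have a: "atom_args (psubst_atom (sig X \<rho>) p) ! j = psubst_trm (sig X \<rho>) (atom_args p ! j)"
    using j by (simp add: psubst_atom_def)
  show "case atom_args (psubst_atom (sig X \<rho>) p) ! j of Var x \<Rightarrow> True | Obj c \<Rightarrow> c = snd (ground_atom \<rho> p) ! j"
    unfolding a e by (cases "atom_args p ! j") (auto simp: sig_def)
qed (auto simp: psubst_atom_def ground_atom_def)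

lemma P_b: "vars_atom p \<subseteq> X \<Longrightarrow> psubst_atom (sig X \<rho>) p = atom_of_fact (ground_atom \<rho> p)"
proof -
  assume h: "vars_atom p \<subseteq> X"
  have "\<And>t. t \<in> set (atom_args p) \<Longrightarrow> psubst_trm (sig X \<rho>) t = Obj (subst_trm \<rho> t)"
  proof -
    fix t assume "t \<in> set (atom_args p)"
    then have "vars_trm t \<subseteq> X" using h unfolding vars_atom_def by blast
    then show "psubst_trm (sig X \<rho>) t = Obj (subst_trm \<rho> t)"
      by (cases t) (auto simp: sig_def)
  qed
  then show ?thesis by (simp add: psubst_atom_def atom_of_fact_def ground_atom_def)
qed

lemma P_c: "psubst_atom (sig X \<rho>) p = atom_of_fact f \<Longrightarrow> f = ground_atom \<rho> p"
proof -
  assume h: "psubst_atom (sig X \<rho>) p = atom_of_fact f"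
  then have pr: "atom_pred p = fst f" and m: "map (psubst_trm (sig X \<rho>)) (atom_args p) = map Obj (snd f)"
    by (simp_all add: psubst_atom_def atom_of_fact_def)
  have key: "\<And>t c. psubst_trm (sig X \<rho>) t = Obj c \<Longrightarrow> c = subst_trm \<rho> t"
  proof -
    fix t c assume "psubst_trm (sig X \<rho>) t = Obj c"
    then show "c = subst_trm \<rho> t" by (cases t) (auto simp: sig_def split: if_splits)
  qed
  then have "\<And>t. psubst_trm (sig X \<rho>) t \<in> range Obj \<Longrightarrow> psubst_trm (sig X \<rho>) t = Obj (subst_trm \<rho> t)"
    by blast
  have len: "length (atom_args p) = length (snd f)" using m by (metis length_map)
  have "snd f = map (subst_trm \<rho>) (atom_args p)"
  proof (rule nth_equalityI)
    show "length (snd f) = length (map (subst_trm \<rho>) (atom_args p))" using len by simp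
  next
    fix j assume j: "j < length (snd f)"
    have "map (psubst_trm (sig X \<rho>)) (atom_args p) ! j = map Obj (snd f) ! j" using m by simp
    then have "psubst_trm (sig X \<rho>) (atom_args p ! j) = Obj (snd f ! j)" using j len by simp
    then have "snd f ! j = subst_trm \<rho> (atom_args p ! j)" using key by blast
    then show "snd f ! j = map (subst_trm \<rho>) (atom_args p) ! j" using j len by simp
  qed
  then show ?thesis using pr by (cases f) (simp add: ground_atom_def)
qed

lemma matches_ground: "matches (atom_of_fact g) f \<Longrightarrow> f = g"
proof -
  assume h: "matches (atom_of_fact g) f"
  then have a: "fst g = fst f" "length (snd g) = length (snd f)"
    and b: "\<forall>j<length (snd f). snd g ! j = snd f ! j"
    by (auto simp: matches_def atom_of_fact_def)
  have "snd g = snd f" using a(2) b by (simp add: nth_equalityI)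
  then show ?thesis using a(1) by (simp add: prod_eq_iff)
qed

lemma P_d: "vars_atom p \<subseteq> X \<Longrightarrow> matches (psubst_atom (sig X \<rho>) p) f \<Longrightarrow> f = ground_atom \<rho> p"
  using P_b matches_ground by metis



definition edge_ok :: "('p,'v,'o) rule \<Rightarrow> ('p,'o) fact set \<Rightarrow> ('v \<times> 'o) set \<Rightarrow> bool" where
  "edge_ok r J e \<longleftrightarrow> (\<forall>p\<in>pos_atoms r. \<exists>f\<in>J. matches (psubst_atom (psub_of e) p) f) \<and>
      (\<forall>p\<in>neg_atoms r. psubst_atom (psub_of e) p \<notin> atom_of_fact ` J)"

lemma edge_elim: "e \<in> scg_edges r J \<Longrightarrow> \<exists>v v'. e = {v,v'} \<and> v \<in> scg_verts r \<and> v' \<in> scg_verts r \<and> v \<noteq> v' \<and> fst v \<noteq> fst v' \<and> edge_ok r J e"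
proof -
  assume "e \<in> scg_edges r J"
  then obtain v v' where h: "e = {v,v'}" "v \<in> scg_verts r" "v' \<in> scg_verts r" "v \<noteq> v'"
      "\<not> (fst v = fst v' \<and> snd v \<noteq> snd v')"
      "\<not> (\<exists>p\<in>pos_atoms r. \<forall>f\<in>J. \<not> matches (psubst_atom (psub_of {v, v'}) p) f)"
      "\<not> (\<exists>p\<in>neg_atoms r. psubst_atom (psub_of {v, v'}) p \<in> atom_of_fact ` J)"
    unfolding scg_edges_def by blast
  have "fst v \<noteq> fst v'" using h(4,5) by (metis prod.collapse)
  moreover have "edge_ok r J e" using h(1,6,7) unfolding edge_ok_def by blast
  ultimately show ?thesis using h(1-4) by blast
qed

lemma edge_iff: "v \<in> scg_verts r \<Longrightarrow> v' \<in> scg_verts r \<Longrightarrow> fst v \<noteq> fst v' \<Longrightarrow>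
   {v,v'} \<in> scg_edges r J \<longleftrightarrow> edge_ok r J {v,v'}"
proof
  assume "{v,v'} \<in> scg_edges r J" then show "edge_ok r J {v,v'}" using edge_elim by metis
next
  assume "v \<in> scg_verts r" "v' \<in> scg_verts r" "fst v \<noteq> fst v'" "edge_ok r J {v,v'}"
  then have "v \<noteq> v'" by blast
  then show "{v,v'} \<in> scg_edges r J" unfolding scg_edges_def mem_Collect_eq
    apply (rule_tac x=v in exI, rule_tac x=v' in exI)
    using \<open>v \<in> scg_verts r\<close> \<open>v' \<in> scg_verts r\<close> \<open>fst v \<noteq> fst v'\<close> \<open>edge_ok r J {v,v'}\<close>
    unfolding edge_ok_def by simp
qed

definition graph :: "('v \<Rightarrow> 'o) \<Rightarrow> ('p,'v,'o) rule \<Rightarrow> ('v \<times> 'o) set" where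
  "graph \<rho> r = (\<lambda>x. (x, \<rho> x)) ` vars_rule r"

lemma clique_graph:
  assumes "finite (vars_rule r)"
  shows "is_clique (scg_verts r) (scg_edges r J) (card (vars_rule r)) (graph \<rho> r) \<longleftrightarrow>
    (\<forall>x\<in>vars_rule r. \<forall>y\<in>vars_rule r. x \<noteq> y \<longrightarrow> edge_ok r J {(x,\<rho> x),(y,\<rho> y)})"
proof -
  have c: "card (graph \<rho> r) = card (vars_rule r)" unfolding graph_def
    by (rule card_image) (simp add: inj_on_def)
  have f: "finite (graph \<rho> r)" using assms by (simp add: graph_def)
  have s: "graph \<rho> r \<subseteq> scg_verts r" by (auto simp: graph_def scg_verts_def)
  have "(\<forall>v\<in>graph \<rho> r. \<forall>v'\<in>graph \<rho> r. v \<noteq> v' \<longrightarrow> {v, v'} \<in> scg_edges r J) \<longleftrightarrow>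
    (\<forall>x\<in>vars_rule r. \<forall>y\<in>vars_rule r. x \<noteq> y \<longrightarrow> edge_ok r J {(x,\<rho> x),(y,\<rho> y)})"
  proof
    assume h: "\<forall>v\<in>graph \<rho> r. \<forall>v'\<in>graph \<rho> r. v \<noteq> v' \<longrightarrow> {v, v'} \<in> scg_edges r J"
    show "\<forall>x\<in>vars_rule r. \<forall>y\<in>vars_rule r. x \<noteq> y \<longrightarrow> edge_ok r J {(x,\<rho> x),(y,\<rho> y)}"
    proof (intro ballI impI)
      fix x y assume xy: "x \<in> vars_rule r" "y \<in> vars_rule r" "x \<noteq> y"
      then have "{(x,\<rho> x),(y,\<rho> y)} \<in> scg_edges r J" using h by (auto simp: graph_def)
      then show "edge_ok r J {(x,\<rho> x),(y,\<rho> y)}" using edge_iff xy by (metis fst_conv scg_verts_def mem_Collect_eq)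
    qed
  next
    assume h: "\<forall>x\<in>vars_rule r. \<forall>y\<in>vars_rule r. x \<noteq> y \<longrightarrow> edge_ok r J {(x,\<rho> x),(y,\<rho> y)}"
    show "\<forall>v\<in>graph \<rho> r. \<forall>v'\<in>graph \<rho> r. v \<noteq> v' \<longrightarrow> {v, v'} \<in> scg_edges r J"
    proof (intro ballI impI)
      fix v v' assume v: "v \<in> graph \<rho> r" "v' \<in> graph \<rho> r" "v \<noteq> v'"
      then obtain x y where "v = (x, \<rho> x)" "v' = (y, \<rho> y)" "x \<in> vars_rule r" "y \<in> vars_rule r" "x \<noteq> y"
        by (auto simp: graph_def)
      then show "{v, v'} \<in> scg_edges r J" using edge_iff[of "(x, \<rho> x)" r "(y, \<rho> y)" J] h by (simp add: scg_verts_def)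
    qed
  qed
  then show ?thesis using c f s by (simp add: is_clique_def)
qed

lemma clique_is_graph:
  assumes cl: "is_clique (scg_verts r) (scg_edges r J) (card (vars_rule r)) C"
    and fin: "finite (vars_rule r)"
  shows "C = graph (clique_subst C) r"
proof -
  have inj: "inj_on fst C"
  proof (rule inj_onI)
    fix v v' assume vv: "v \<in> C" "v' \<in> C" "fst v = fst v'"
    show "v = v'"
    proof (rule ccontr)
      assume "v \<noteq> v'"
      then have "{v,v'} \<in> scg_edges r J" using cl vv unfolding is_clique_def by blast
      then obtain w w' where ww: "{v,v'} = {w,w'}" "fst w \<noteq> fst w'" using edge_elim by metis
      then have "(v = w \<and> v' = w') \<or> (v = w' \<and> v' = w)" by (simp add: doubleton_eq_iff)
      then show False using ww(2) vv(3) by auto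
    qed
  qed
  have sub: "fst ` C \<subseteq> vars_rule r" using cl by (auto simp: is_clique_def scg_verts_def)
  have "card (fst ` C) = card (vars_rule r)" using inj cl by (simp add: card_image is_clique_def)
  then have eq: "fst ` C = vars_rule r" using sub fin by (simp add: card_subset_eq)
  have cs: "\<And>x c. (x,c) \<in> C \<Longrightarrow> clique_subst C x = c"
  proof -
    fix x c assume xc: "(x,c) \<in> C"
    have "(x, clique_subst C x) \<in> C" unfolding clique_subst_def using xc by (rule someI)
    then show "clique_subst C x = c" using inj xc inj_onD by fastforce
  qed
  show ?thesis
  proof
    show "C \<subseteq> graph (clique_subst C) r"
    proof
      fix v assume "v \<in> C"
      then have "fst v \<in> vars_rule r" "clique_subst C (fst v) = snd v" using cs eq by auto
      then have "v = (fst v, clique_subst C (fst v))" by simp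
      then show "v \<in> graph (clique_subst C) r" unfolding graph_def
        using \<open>fst v \<in> vars_rule r\<close> by (rule image_eqI)
    qed
  next
    show "graph (clique_subst C) r \<subseteq> C"
    proof
      fix v assume "v \<in> graph (clique_subst C) r"
      then obtain x where x: "x \<in> vars_rule r" "v = (x, clique_subst C x)" by (auto simp: graph_def)
      then have "x \<in> fst ` C" using eq x(1) by simp
      then obtain c where c: "(x,c) \<in> C" by auto
      then show "v \<in> C" using cs[OF c] x(2) by simp
    qed
  qed
qed

lemma cover:
  assumes "finite V" "2 \<le> card V" "S \<subseteq> V" "card S \<le> 2"
  shows "\<exists>x\<in>V. \<exists>y\<in>V. x \<noteq> y \<and> S \<subseteq> {x,y}"
proof -
  have fS: "finite S" using assms finite_subset by blast
  have two: "\<And>a. a \<in> V \<Longrightarrow> \<exists>b\<in>V. b \<noteq> a"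
  proof -
    fix a assume "a \<in> V"
    have "card (V - {a}) = card V - 1" using assms(1) \<open>a \<in> V\<close> by (simp add: card_Diff_singleton)
    then have "card (V - {a}) \<ge> 1" using assms(2) by linarith
    then have "V - {a} \<noteq> {}" by (metis card.empty not_one_le_zero)
    then show "\<exists>b\<in>V. b \<noteq> a" by blast
  qed
  have "card S = 0 \<or> card S = 1 \<or> card S = 2" using assms by linarith
  then show ?thesis
  proof (elim disjE)
    assume "card S = 0"
    then have "S = {}" using fS by simp
    have "V \<noteq> {}" using assms(2) by auto
    then obtain a where "a \<in> V" by blast
    then show ?thesis using two \<open>S = {}\<close> by blast
  next
    assume "card S = 1"
    then obtain a where "S = {a}" by (rule card_1_singletonE)
    then have "a \<in> V" using assms(3) by simp
    then show ?thesis using two \<open>S = {a}\<close> by blast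
  next
    assume "card S = 2"
    then obtain a b where "S = {a,b}" "a \<noteq> b" using card_2_iff[of S] by blast
    then have "a \<in> V" "b \<in> V" using assms(3) by simp_all
    then show ?thesis using \<open>S = {a,b}\<close> \<open>a \<noteq> b\<close> by blast
  qed
qed



lemma pos_vars: "p \<in> pos_atoms r \<Longrightarrow> vars_atom p \<subseteq> vars_rule r \<and> vars_atom p = vars_lit (Pos p) \<and> Pos p \<in> body r"
  by (auto simp: pos_atoms_def vars_rule_def vars_lit_def)

lemma neg_vars: "p \<in> neg_atoms r \<Longrightarrow> vars_atom p \<subseteq> vars_rule r \<and> vars_atom p = vars_lit (Neg p) \<and> Neg p \<in> body r"
  by (auto simp: neg_atoms_def vars_rule_def vars_lit_def)

lemma edge_ok_pair: "edge_ok r J {(x, \<rho> x), (y, \<rho> y)} \<longleftrightarrow>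
   (\<forall>p\<in>pos_atoms r. \<exists>f\<in>J. matches (psubst_atom (sig {x,y} \<rho>) p) f) \<and>
   (\<forall>p\<in>neg_atoms r. psubst_atom (sig {x,y} \<rho>) p \<notin> atom_of_fact ` J)"
  by (simp add: edge_ok_def psub_of_pair)

lemma edge_ok_posD: "edge_ok r J {(x, \<rho> x), (y, \<rho> y)} \<Longrightarrow> p \<in> pos_atoms r \<Longrightarrow>
   \<exists>f\<in>J. matches (psubst_atom (sig {x,y} \<rho>) p) f"
  unfolding edge_ok_pair by (elim conjE) (erule bspec)

lemma edge_ok_negD: "edge_ok r J {(x, \<rho> x), (y, \<rho> y)} \<Longrightarrow> p \<in> neg_atoms r \<Longrightarrow>
   psubst_atom (sig {x,y} \<rho>) p \<notin> atom_of_fact ` J"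
  unfolding edge_ok_pair by (elim conjE) (erule bspec)

lemma edge_ok_pairI: "(\<forall>p\<in>pos_atoms r. \<exists>f\<in>J. matches (psubst_atom (sig {x,y} \<rho>) p) f) \<Longrightarrow>
   (\<forall>p\<in>neg_atoms r. psubst_atom (sig {x,y} \<rho>) p \<notin> atom_of_fact ` J) \<Longrightarrow> edge_ok r J {(x, \<rho> x), (y, \<rho> y)}"
  unfolding edge_ok_pair by (rule conjI)

lemma pos_card: "\<forall>b\<in>body r. card (vars_lit b) \<le> 2 \<Longrightarrow> p \<in> pos_atoms r \<Longrightarrow> vars_atom p \<subseteq> vars_rule r \<and> card (vars_atom p) \<le> 2"
proof -
  assume bd: "\<forall>b\<in>body r. card (vars_lit b) \<le> 2" and p: "p \<in> pos_atoms r"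
  from pos_vars[OF p] have a: "vars_atom p \<subseteq> vars_rule r" "vars_atom p = vars_lit (Pos p)" "Pos p \<in> body r" by auto
  from bd a(3) have "card (vars_lit (Pos p)) \<le> 2" by (rule bspec)
  then show ?thesis using a by simp
qed

lemma neg_card: "\<forall>b\<in>body r. card (vars_lit b) \<le> 2 \<Longrightarrow> p \<in> neg_atoms r \<Longrightarrow> vars_atom p \<subseteq> vars_rule r \<and> card (vars_atom p) \<le> 2"
proof -
  assume bd: "\<forall>b\<in>body r. card (vars_lit b) \<le> 2" and p: "p \<in> neg_atoms r"
  from neg_vars[OF p] have a: "vars_atom p \<subseteq> vars_rule r" "vars_atom p = vars_lit (Neg p)" "Neg p \<in> body r" by auto
  from bd a(3) have "card (vars_lit (Neg p)) \<le> 2" by (rule bspec)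
  then show ?thesis using a by simp
qed

lemma applic_iff:
  assumes fin: "finite (vars_rule r)" and two: "2 \<le> card (vars_rule r)"
    and bd: "\<forall>b\<in>body r. card (vars_lit b) \<le> 2"
  shows "(\<forall>x\<in>vars_rule r. \<forall>y\<in>vars_rule r. x \<noteq> y \<longrightarrow> edge_ok r J {(x,\<rho> x),(y,\<rho> y)})
     \<longleftrightarrow> applicable J r \<rho>"
proof
  assume h: "\<forall>x\<in>vars_rule r. \<forall>y\<in>vars_rule r. x \<noteq> y \<longrightarrow> edge_ok r J {(x,\<rho> x),(y,\<rho> y)}"
  have hD: "\<And>x y. x \<in> vars_rule r \<Longrightarrow> y \<in> vars_rule r \<Longrightarrow> x \<noteq> y \<Longrightarrow> edge_ok r J {(x,\<rho> x),(y,\<rho> y)}"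
  proof -
    fix x y assume xy: "x \<in> vars_rule r" "y \<in> vars_rule r" "x \<noteq> y"
    from h xy(1) have "\<forall>y\<in>vars_rule r. x \<noteq> y \<longrightarrow> edge_ok r J {(x,\<rho> x),(y,\<rho> y)}" by (rule bspec)
    from this xy(2) have "x \<noteq> y \<longrightarrow> edge_ok r J {(x,\<rho> x),(y,\<rho> y)}" by (rule bspec)
    then show "edge_ok r J {(x,\<rho> x),(y,\<rho> y)}" using xy(3) by (rule mp)
  qed
  have cov: "\<And>p. vars_atom p \<subseteq> vars_rule r \<Longrightarrow> card (vars_atom p) \<le> 2 \<Longrightarrow>
     \<exists>x\<in>vars_rule r. \<exists>y\<in>vars_rule r. x \<noteq> y \<and> vars_atom p \<subseteq> {x,y}"
    using cover[OF fin two] by meson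
  have 1: "ground_pos r \<rho> \<subseteq> J"
  proof
    fix g assume "g \<in> ground_pos r \<rho>"
    then obtain p where p: "p \<in> pos_atoms r" "g = ground_atom \<rho> p" by (auto simp: ground_pos_def)
    then have "vars_atom p \<subseteq> vars_rule r \<and> card (vars_atom p) \<le> 2" using pos_card[OF bd] by blast
    then obtain x y where xy: "x \<in> vars_rule r" "y \<in> vars_rule r" "x \<noteq> y" "vars_atom p \<subseteq> {x,y}"
      using cov by (meson conjE)
    have "edge_ok r J {(x,\<rho> x),(y,\<rho> y)}" using xy(1,2,3) by (rule hD)
    from edge_ok_posD[OF this p(1)]
    obtain f where "f \<in> J" "matches (psubst_atom (sig {x,y} \<rho>) p) f" by (rule bexE)
    then have "f = g" using P_d xy(4) p(2) by blast
    then show "g \<in> J" using \<open>f \<in> J\<close> by simp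
  qed
  have 2: "ground_neg r \<rho> \<inter> J = {}"
  proof (rule ccontr)
    assume "ground_neg r \<rho> \<inter> J \<noteq> {}"
    then obtain p where p: "p \<in> neg_atoms r" "ground_atom \<rho> p \<in> J" by (auto simp: ground_neg_def)
    then have "vars_atom p \<subseteq> vars_rule r \<and> card (vars_atom p) \<le> 2" using neg_card[OF bd] by blast
    then obtain x y where xy: "x \<in> vars_rule r" "y \<in> vars_rule r" "x \<noteq> y" "vars_atom p \<subseteq> {x,y}"
      using cov by (meson conjE)
    have "edge_ok r J {(x,\<rho> x),(y,\<rho> y)}" using xy(1,2,3) by (rule hD)
    then have "psubst_atom (sig {x,y} \<rho>) p \<notin> atom_of_fact ` J" using p(1) by (rule edge_ok_negD)
    moreover have "psubst_atom (sig {x,y} \<rho>) p = atom_of_fact (ground_atom \<rho> p)" using P_b xy(4) by blast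
    ultimately show False using p(2) by blast
  qed
  show "applicable J r \<rho>" using 1 2 by (simp add: applicable_def)
next
  assume a: "applicable J r \<rho>"
  show "\<forall>x\<in>vars_rule r. \<forall>y\<in>vars_rule r. x \<noteq> y \<longrightarrow> edge_ok r J {(x,\<rho> x),(y,\<rho> y)}"
  proof (intro ballI impI)
    fix x y
    have "\<forall>p\<in>pos_atoms r. \<exists>f\<in>J. matches (psubst_atom (sig {x,y} \<rho>) p) f"
    proof
      fix p assume "p \<in> pos_atoms r"
      then have "ground_atom \<rho> p \<in> J" using a by (auto simp: applicable_def ground_pos_def)
      then show "\<exists>f\<in>J. matches (psubst_atom (sig {x,y} \<rho>) p) f" using P_a by blast
    qed
    moreover have "\<forall>p\<in>neg_atoms r. psubst_atom (sig {x,y} \<rho>) p \<notin> atom_of_fact ` J"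
    proof (intro ballI notI)
      fix p assume p: "p \<in> neg_atoms r" "psubst_atom (sig {x,y} \<rho>) p \<in> atom_of_fact ` J"
      then obtain f where f: "f \<in> J" "psubst_atom (sig {x,y} \<rho>) p = atom_of_fact f" by blast
      then have "f = ground_atom \<rho> p" using P_c by blast
      then have "f \<in> ground_neg r \<rho>" using p(1) by (simp add: ground_neg_def)
      then show False using a f(1) by (auto simp: applicable_def)
    qed
    ultimately show "edge_ok r J {(x,\<rho> x),(y,\<rho> y)}" by (rule edge_ok_pairI)
  qed
qed

lemma delta_iff:
  assumes fin: "finite (vars_rule r)" and two: "2 \<le> card (vars_rule r)"
    and bd: "\<forall>b\<in>body r. card (vars_lit b) \<le> 2"
    and sub: "J' \<subseteq> J" and a: "applicable J r \<rho>"
  shows "(\<exists>x\<in>vars_rule r. \<exists>y\<in>vars_rule r. x \<noteq> y \<and> \<not> edge_ok r J' {(x,\<rho> x),(y,\<rho> y)})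
     \<longleftrightarrow> (\<exists>p\<in>pos_atoms r. ground_atom \<rho> p \<notin> J')"
proof
  assume "\<exists>x\<in>vars_rule r. \<exists>y\<in>vars_rule r. x \<noteq> y \<and> \<not> edge_ok r J' {(x,\<rho> x),(y,\<rho> y)}"
  then obtain x y where n: "\<not> edge_ok r J' {(x,\<rho> x),(y,\<rho> y)}" by blast
  have "\<forall>p\<in>neg_atoms r. psubst_atom (sig {x,y} \<rho>) p \<notin> atom_of_fact ` J'"
  proof (intro ballI notI)
    fix p assume p: "p \<in> neg_atoms r" "psubst_atom (sig {x,y} \<rho>) p \<in> atom_of_fact ` J'"
    then obtain f where f: "f \<in> J'" "psubst_atom (sig {x,y} \<rho>) p = atom_of_fact f" by blast
    then have "f = ground_atom \<rho> p" using P_c by blast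
    then have "f \<in> ground_neg r \<rho>" using p(1) by (simp add: ground_neg_def)
    then show False using a f(1) sub by (auto simp: applicable_def)
  qed
  note negok = this
  have "\<exists>p\<in>pos_atoms r. \<forall>f\<in>J'. \<not> matches (psubst_atom (sig {x,y} \<rho>) p) f"
  proof (rule ccontr)
    assume "\<not> (\<exists>p\<in>pos_atoms r. \<forall>f\<in>J'. \<not> matches (psubst_atom (sig {x,y} \<rho>) p) f)"
    then have "\<forall>p\<in>pos_atoms r. \<exists>f\<in>J'. matches (psubst_atom (sig {x,y} \<rho>) p) f" by simp
    then have "edge_ok r J' {(x,\<rho> x),(y,\<rho> y)}" using negok by (rule edge_ok_pairI)
    then show False using n by contradiction
  qed
  then obtain p where p: "p \<in> pos_atoms r" "\<forall>f\<in>J'. \<not> matches (psubst_atom (sig {x,y} \<rho>) p) f"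
    by blast
  then have "ground_atom \<rho> p \<notin> J'" using P_a by blast
  then show "\<exists>p\<in>pos_atoms r. ground_atom \<rho> p \<notin> J'" using p(1) by blast
next
  assume "\<exists>p\<in>pos_atoms r. ground_atom \<rho> p \<notin> J'"
  then obtain p where p: "p \<in> pos_atoms r" "ground_atom \<rho> p \<notin> J'" by blast
  then have "vars_atom p \<subseteq> vars_rule r" "card (vars_atom p) \<le> 2" using pos_card[OF bd] by blast+
  then obtain x y where xy: "x \<in> vars_rule r" "y \<in> vars_rule r" "x \<noteq> y" "vars_atom p \<subseteq> {x,y}"
    using cover[OF fin two] by meson
  have "\<not> edge_ok r J' {(x,\<rho> x),(y,\<rho> y)}"
  proof
    assume "edge_ok r J' {(x,\<rho> x),(y,\<rho> y)}"
    from edge_ok_posD[OF this p(1)]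
    obtain f where "f \<in> J'" "matches (psubst_atom (sig {x,y} \<rho>) p) f" by (rule bexE)
    then have "f = ground_atom \<rho> p" using P_d xy(4) by blast
    then show False using \<open>f \<in> J'\<close> p(2) by simp
  qed
  then show "\<exists>x\<in>vars_rule r. \<exists>y\<in>vars_rule r. x \<noteq> y \<and> \<not> edge_ok r J' {(x,\<rho> x),(y,\<rho> y)}"
    using xy by blast
qed

lemma exists_min:
  assumes lo: "linear_order_on A rk"
  shows "finite S \<Longrightarrow> S \<noteq> {} \<Longrightarrow> S \<subseteq> A \<Longrightarrow> \<exists>m\<in>S. \<forall>e\<in>S. (m,e) \<in> rk"
proof (induction S rule: finite_ne_induct)
  case (singleton x)
  have "refl_on A rk" using lo by (simp add: linear_order_on_def partial_order_on_def preorder_on_def)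
  then show ?case using singleton refl_onD by fastforce
next
  case (insert x F)
  have rf: "refl_on A rk" and tr: "trans rk" and to: "total_on A rk"
    using lo by (simp_all add: linear_order_on_def partial_order_on_def preorder_on_def)
  obtain m where m: "m \<in> F" "\<forall>e\<in>F. (m,e) \<in> rk" using insert by blast
  have xA: "x \<in> A" and mA: "m \<in> A" using insert m by auto
  have xx: "(x,x) \<in> rk" using rf xA refl_onD by fastforce
  have "x \<noteq> m" using insert m by blast
  then have "(x,m) \<in> rk \<or> (m,x) \<in> rk" using to xA mA by (simp add: total_on_def)
  then show ?case
  proof
    assume "(x,m) \<in> rk"
    then have "\<forall>e\<in>F. (x,e) \<in> rk" using m(2) tr by (meson transD)
    then show ?case using xx by blast
  next
    assume "(m,x) \<in> rk"
    then show ?case using m by blast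
  qed
qed

lemma owner_eq:
  assumes lo: "linear_order_on A rk" and e: "e \<in> D" "e \<subseteq> C"
    and mn: "\<forall>e'\<in>D. e' \<subseteq> C \<longrightarrow> (e, e') \<in> rk"
  shows "owner rk D C = e"
  unfolding owner_def
proof (rule the_equality)
  show "e \<in> D \<and> e \<subseteq> C \<and> (\<forall>e'\<in>D. e' \<subseteq> C \<longrightarrow> (e, e') \<in> rk)" using e mn by blast
next
  fix e2 assume h: "e2 \<in> D \<and> e2 \<subseteq> C \<and> (\<forall>e'\<in>D. e' \<subseteq> C \<longrightarrow> (e2, e') \<in> rk)"
  have an: "antisym rk" using lo by (simp add: linear_order_on_def partial_order_on_def)
  have "(e, e2) \<in> rk" "(e2, e) \<in> rk" using h e mn by auto
  then show "e2 = e" using an antisymD by metis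
qed

lemma edge_card: "e \<in> scg_edges r J \<Longrightarrow> card e = 2"
  using edge_elim by fastforce

lemma clique_subst_graph: "z \<in> vars_rule r \<Longrightarrow> clique_subst (graph \<rho> r) z = \<rho> z"
  unfolding clique_subst_def graph_def by (rule some_equality) auto

lemma JD: "Jprev F Rs strat i t \<subseteq> Jst F Rs strat i t \<and>
   Dst F Rs strat i t = Jst F Rs strat i t - Jprev F Rs strat i t"
proof (cases t)
  case 0
  then show ?thesis by (simp add: Jprev_def Jst_def Dst_def sn_state_def)
next
  case (Suc s)
  have "sn_state F Rs strat i t = sn_step (rule_stratum Rs strat i) (sn_state F Rs strat i s)"
    using Suc by (simp add: sn_state_def)
  then show ?thesis using Suc by (auto simp: Jprev_def Jst_def Dst_def sn_step_def Let_def)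
qed

lemma Dsuc: "Dst F Rs strat i (Suc t) =
   sn_heads (rule_stratum Rs strat i) (Jst F Rs strat i t) (Dst F Rs strat i t) - Jst F Rs strat i t"
  by (simp add: Dst_def Jst_def sn_state_def sn_step_def Let_def)



theorem theorem2:
  fixes F :: "('p,'o) fact set" and Rs :: "('p,'v,'o) rule set"
    and ar :: "'p \<Rightarrow> nat" and strat :: "'p \<Rightarrow> nat" and l i t :: nat
    and rk :: "('v \<times> 'o) set rel"
  assumes "wf_program ar F Rs"
    and "stratification Rs l strat"
    and "i \<in> {1..l}"
    and "\<forall>r\<in>rule_stratum Rs strat i. card (vars_rule r) \<ge> 2"
    and "\<forall>r\<in>rule_stratum Rs strat i. \<forall>b\<in>body r. card (vars_lit b) \<le> 2"
    and "linear_order_on {e. card e = 2} rk"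
  shows "reported_heads F Rs strat rk i t
           = sn_heads (rule_stratum Rs strat i) (Jst F Rs strat i t) (Dst F Rs strat i t)
         \<and> Dst F Rs strat i (Suc t) = reported_heads F Rs strat rk i t - Jst F Rs strat i t"
proof -
  define R where "R = rule_stratum Rs strat i"
  define J where "J = Jst F Rs strat i t"
  define J' where "J' = Jprev F Rs strat i t"
  define D where "D = Dst F Rs strat i t"
  have sub: "J' \<subseteq> J" and DJ: "D = J - J'" using JD[of F Rs strat i t] by (simp_all add: J_def J'_def D_def)
  have two: "\<And>r. r \<in> R \<Longrightarrow> 2 \<le> card (vars_rule r)" using assms(4) R_def by blast
  have fin: "\<And>r. r \<in> R \<Longrightarrow> finite (vars_rule r)" using two by (metis card.infinite not_numeral_le_zero)
  have bd: "\<And>r. r \<in> R \<Longrightarrow> \<forall>b\<in>body r. card (vars_lit b) \<le> 2" using assms(5) R_def by blast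
  have del: "\<And>r. delta_edges F Rs strat i r t = scg_edges r J - scg_edges r J'"
    by (simp add: delta_edges_def J_def J'_def)
  have eq: "reported_heads F Rs strat rk i t = sn_heads R J D"
  proof
    show "reported_heads F Rs strat rk i t \<subseteq> sn_heads R J D"
    proof
      fix h assume "h \<in> reported_heads F Rs strat rk i t"
      then obtain r C e where r: "r \<in> R" and cl: "is_clique (scg_verts r) (scg_edges r J) (card (vars_rule r)) C"
        and e: "e \<in> scg_edges r J - scg_edges r J'" "e \<subseteq> C" and h: "h = ground_atom (clique_subst C) (head r)"
        unfolding reported_heads_def R_def J_def del by blast
      define \<rho> where "\<rho> = clique_subst C"
      have Cg: "C = graph \<rho> r" using clique_is_graph[OF cl fin[OF r]] \<rho>_def by simp
      have allok: "\<forall>x\<in>vars_rule r. \<forall>y\<in>vars_rule r. x \<noteq> y \<longrightarrow> edge_ok r J {(x,\<rho> x),(y,\<rho> y)}"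
        using cl Cg clique_graph[OF fin[OF r]] by metis
      have ap: "applicable J r \<rho>" using allok applic_iff[OF fin[OF r] two[OF r] bd[OF r]] by blast
      obtain v v' where vv: "e = {v,v'}" "v \<in> scg_verts r" "v' \<in> scg_verts r" "fst v \<noteq> fst v'"
        using edge_elim[of e r J] e(1) by blast
      have "v \<in> graph \<rho> r" "v' \<in> graph \<rho> r" using vv(1) e(2) Cg by auto
      then obtain x y where xy: "x \<in> vars_rule r" "y \<in> vars_rule r" "v = (x, \<rho> x)" "v' = (y, \<rho> y)"
        unfolding graph_def by blast
      have "x \<noteq> y" using xy vv(4) by simp
      have "\<not> edge_ok r J' {(x,\<rho> x),(y,\<rho> y)}"
      proof
        assume "edge_ok r J' {(x,\<rho> x),(y,\<rho> y)}"
        then have "e \<in> scg_edges r J'" using edge_iff[OF vv(2) vv(3) vv(4)] vv(1) xy(3,4) by simp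
        then show False using e(1) by blast
      qed
      then have "\<exists>p\<in>pos_atoms r. ground_atom \<rho> p \<notin> J'"
        using delta_iff[OF fin[OF r] two[OF r] bd[OF r] sub ap] xy(1,2) \<open>x \<noteq> y\<close> by blast
      then obtain p where p: "p \<in> pos_atoms r" "ground_atom \<rho> p \<notin> J'" by blast
      have "ground_atom \<rho> p \<in> J" using ap p(1) by (auto simp: applicable_def ground_pos_def)
      then have "ground_atom \<rho> p \<in> ground_pos r \<rho> \<inter> D" using p DJ by (auto simp: ground_pos_def)
      then have "ground_pos r \<rho> \<inter> D \<noteq> {}" by blast
      then show "h \<in> sn_heads R J D" unfolding sn_heads_def using r ap h \<rho>_def by blast
    qed
  next
    show "sn_heads R J D \<subseteq> reported_heads F Rs strat rk i t"
    proof
      fix h assume "h \<in> sn_heads R J D"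
      then obtain r \<rho> where r: "r \<in> R" and ap: "applicable J r \<rho>" and ne: "ground_pos r \<rho> \<inter> D \<noteq> {}"
        and h: "h = ground_atom \<rho> (head r)"
        unfolding sn_heads_def by blast
      obtain p where p: "p \<in> pos_atoms r" "ground_atom \<rho> p \<in> D" using ne by (auto simp: ground_pos_def)
      then have "ground_atom \<rho> p \<notin> J'" using DJ by simp
      then have "\<exists>x\<in>vars_rule r. \<exists>y\<in>vars_rule r. x \<noteq> y \<and> \<not> edge_ok r J' {(x,\<rho> x),(y,\<rho> y)}"
        using delta_iff[OF fin[OF r] two[OF r] bd[OF r] sub ap] p(1) by blast
      then obtain x y where xy: "x \<in> vars_rule r" "y \<in> vars_rule r" "x \<noteq> y"
        and nok: "\<not> edge_ok r J' {(x,\<rho> x),(y,\<rho> y)}" by blast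
      have allok: "\<forall>x\<in>vars_rule r. \<forall>y\<in>vars_rule r. x \<noteq> y \<longrightarrow> edge_ok r J {(x,\<rho> x),(y,\<rho> y)}"
        using ap applic_iff[OF fin[OF r] two[OF r] bd[OF r]] by blast
      define C where "C = graph \<rho> r"
      have cl: "is_clique (scg_verts r) (scg_edges r J) (card (vars_rule r)) C"
        using allok clique_graph[OF fin[OF r]] C_def by metis
      have vx: "(x, \<rho> x) \<in> scg_verts r" "(y, \<rho> y) \<in> scg_verts r" using xy by (auto simp: scg_verts_def)
      have fxy: "fst (x, \<rho> x) \<noteq> fst (y, \<rho> y)" using xy by simp
      have okJ: "edge_ok r J {(x,\<rho> x),(y,\<rho> y)}" using allok xy by blast
      define e0 where "e0 = {(x,\<rho> x),(y,\<rho> y)}"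
      have e0J: "e0 \<in> scg_edges r J" using edge_iff[OF vx fxy] okJ e0_def by simp
      have e0J': "e0 \<notin> scg_edges r J'" using edge_iff[OF vx fxy] nok e0_def by simp
      have e0C: "e0 \<subseteq> C" using xy e0_def C_def by (auto simp: graph_def)
      define S where "S = {e \<in> scg_edges r J - scg_edges r J'. e \<subseteq> C}"
      have finC: "finite C" using fin[OF r] C_def by (simp add: graph_def)
      have finS: "finite S" unfolding S_def using finC
        by (rule_tac B="Pow C" in finite_subset) auto
      have neS: "S \<noteq> {}" using e0J e0J' e0C S_def by blast
      have SA: "S \<subseteq> {e. card e = 2}" using edge_card S_def by blast
      obtain m where m: "m \<in> S" "\<forall>e\<in>S. (m,e) \<in> rk" using exists_min[OF assms(6) finS neS SA] by blast
      have own: "owner rk (scg_edges r J - scg_edges r J') C = m"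
        by (rule owner_eq[OF assms(6)]) (use m S_def in auto)
      have hh: "h = ground_atom (clique_subst C) (head r)"
      proof -
        have "\<And>z. z \<in> vars_atom (head r) \<Longrightarrow> \<rho> z = clique_subst C z"
        proof -
          fix z assume "z \<in> vars_atom (head r)"
          then have "z \<in> vars_rule r" by (simp add: vars_rule_def)
          then show "\<rho> z = clique_subst C z" using clique_subst_graph C_def by metis
        qed
        then show ?thesis using h ground_atom_cong by metis
      qed
      have "m \<in> scg_edges r J - scg_edges r J'" "m \<subseteq> C" using m(1) S_def by auto
      then show "h \<in> reported_heads F Rs strat rk i t"
        unfolding reported_heads_def del using r cl own hh R_def J_def by blast
    qed
  qed
  moreover have "Dst F Rs strat i (Suc t) = reported_heads F Rs strat rk i t - Jst F Rs strat i t"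
    using Dsuc eq R_def J_def D_def by simp
  ultimately show ?thesis using R_def J_def D_def by simp
qed

end
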